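(* Let $\tau$ be a full binary tree with survivals with parameters $p_0,p_1,p_2,q_0,q_1,q_2$, rooted at a type 1 vertex, such that $\mathbb P(\Vert\tau\Vert<\infty)=1$. Let $D_1$ and $D_2$ be the numbers of type 1 (left) and type 2 (right) fathers in $\tau$, the root counted as a left father when it has two children. Set $$P=\frac{p_0}{p_0+p_2},\qquad Q=\frac{q_0}{q_0+q_2}.$$ Then for all integers $n\geq1$ and $m\geq 0$, $$\mathbb P(D_1=n,\,D_2=m)=N(n+m,m+1)\,P^{m+1}(1-P)^{n}\,Q^{n}(1-Q)^{m},$$ i.e. the likelihood of $(P,Q)$ given $n$ left fathers and $m$ right fathers is $\mathscr L(P,Q\mid n,m)=N(n+m,m+1)P^{m+1}(1-P)^nQ^n(1-Q)^m$.
   Context: A full binary tree with survivals is a two-type Galton–Watson tree (types $1,2$; each vertex of type $j$ independently has $\alpha_1$ children of type 1 and $\alpha_2$ children of type 2 with probability $\mu^{(j)}(\alpha_1,\alpha_2)$, children ordered by type, so that of two siblings the left one has type 1 and the right one type 2) with offspring distribution $\mu^{(1)}(0,0)=p_0$, $\mu^{(1)}(1,0)=p_1$, $\mu^{(1)}(1,1)=p_2$, $\mu^{(2)}(0,0)=q_0$, $\mu^{(2)}(0,1)=q_1$, $\mu^{(2)}(1,1)=q_2$, where $p_0,p_1,p_2,q_0,q_1,q_2\in(0,1)$ and $p_0+p_1+p_2=q_0+q_1+q_2=1$. A father is a vertex with two children. $\Vert\tau\Vert$ is the number of edges of $\tau$. Narayana numbers: $N(n,k)=\frac1n\binom nk\binom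 n{k-1}$ for $n\geq1$, $1\le k\le n$. *)

theory Defs
  imports "HOL-Analysis.Analysis"
begin

text \<open>Vertex types are
determined by position: the root has type 1, the only child of a vertex with one
child has the type of its parent (children of type j vertex are (1,0) for j=1,
(0,1) for j=2), and of two siblings the left one has type 1 and the right one type 2.\<close>

datatype btree_s = Leaf | Unary btree_s | Binary btree_s btree_s

datatype vtype = T1 | T2

text \<open>Probability that the two-type Galton--Watson tree started from a vertex of the
given type equals the given finite tree (product of offspring probabilities).\<close>
fun gw_weight :: "real \<Rightarrow> real \<Rightarrow> real \<Rightarrow> real \<Rightarrow> real \<Rightarrow> real \<Rightarrow> vtype \<Rightarrow> btree_s \<Rightarrow> real" where
  "gw_weight p0 p1 p2 q0 q1 q2 T1 Leaf = p0"
| "gw_weight p0 p1 p2 q0 q1 q2 T1 (Unary t) = p1 * gw_weight p0 p1 p2 q0 q1 q2 T1 t"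
| "gw_weight p0 p1 p2 q0 q1 q2 T1 (Binary l r) =
     p2 * gw_weight p0 p1 p2 q0 q1 q2 T1 l * gw_weight p0 p1 p2 q0 q1 q2 T2 r"
| "gw_weight p0 p1 p2 q0 q1 q2 T2 Leaf = q0"
| "gw_weight p0 p1 p2 q0 q1 q2 T2 (Unary t) = q1 * gw_weight p0 p1 p2 q0 q1 q2 T2 t"
| "gw_weight p0 p1 p2 q0 q1 q2 T2 (Binary l r) =
     q2 * gw_weight p0 p1 p2 q0 q1 q2 T1 l * gw_weight p0 p1 p2 q0 q1 q2 T2 r"

fun fathers :: "vtype \<Rightarrow> vtype \<Rightarrow> btree_s \<Rightarrow> nat" where
  "fathers j ty Leaf = 0"
| "fathers j ty (Unary t) = fathers j ty t"
| "fathers j ty (Binary l r) =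
     (if ty = j then 1 else 0) + fathers j T1 l + fathers j T2 r"

definition narayana :: "nat \<Rightarrow> nat \<Rightarrow> real" where
  "narayana n k = real (n choose k) * real (n choose (k - 1)) / real n"

end

theory Submission
  imports Defs
begin

definition Cc :: "nat \<Rightarrow> nat \<Rightarrow> nat \<Rightarrow> nat \<Rightarrow> real" where
 "Cc r s n m = (if n = 0 \<and> m = 0 then 1 else
    real ((r+n+m) choose n) * real ((s+n+m) choose m) * real (r * s + r * n + s * m)
      / (real (r+n+m) * real (s+n+m)))"

lemma aux_cancel: "(y::real) \<noteq> 0 \<Longrightarrow> x * (a * y) / (y * z) = x * a / z"
  by (cases "z = 0") (simp_all add: field_simps)

lemma aux2: "(x * u / SN) * Z * b / (N * S) + (x * v / SN) * Z * d / (N * S) = x * Z / (SN * N * S) * (u * b + v * d)" for x u SN Z b N S v d :: real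
  by (simp add: divide_simps ring_distribs)

lemma aux3: "(N::real) \<noteq> 0 \<Longrightarrow> x * Z / (SN * N * S) * (a * N) = x * Z * a / (SN * S)"
  by (simp add: divide_simps)

lemma aux4: "(y::real) \<noteq> 0 \<Longrightarrow> y * a * b / (y * z) = a * b / z"
  by (cases "z = 0") (simp_all add: field_simps)

lemma Cc_formula:
  assumes "r+n+m > 0" "s+n+m > 0"
  shows "Cc r s n m = real ((r+n+m) choose n) * real ((s+n+m) choose m) * real (r * s + r * n + s * m)
      / (real (r+n+m) * real (s+n+m))"
  using assms by (auto simp: Cc_def)

lemma Cc_sym: "Cc r s n m = Cc s r m n"
  unfolding Cc_def by (auto simp: algebra_simps)

lemma Cc_00: "Cc 0 0 n m = (if n = 0 \<and> m = 0 then 1 else 0)"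
  unfolding Cc_def by auto

lemma Cc_rec1: "Cc (Suc r) s n m = Cc r s n m + (if n \<ge> 1 then Cc (Suc r) (Suc s) (n-1) m else 0)"
proof (cases "n = 0 \<and> m = 0")
  case True then show ?thesis by (simp add: Cc_def)
next
  case nz: False
  show ?thesis
  proof (cases "n = 0")
    case True
    then have m: "m > 0" using nz by auto
    have eq: "Suc r * s + Suc r * 0 + s * m = s * (Suc r + m)" by (simp add: algebra_simps)
    have "Cc (Suc r) s n m = real ((s+m) choose m) * real (s * (Suc r + m)) / (real (Suc r + m) * real (s+m))"
      using True m by (simp only: Cc_formula eq) simp
    also have "\<dots> = real ((s+m) choose m) * real s / real (s+m)"
      by (simp only: of_nat_mult aux_cancel[of "real (Suc r + m)"] of_nat_eq_0_iff)
    finally have X: "Cc (Suc r) s n m = real ((s+m) choose m) * real s / real (s+m)" .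
    have eq2: "r * s + r * 0 + s * m = s * (r + m)" by (simp add: algebra_simps)
    have "Cc r s n m = real ((s+m) choose m) * real (s * (r + m)) / (real (r + m) * real (s+m))"
      using True m by (simp only: Cc_formula eq2) simp
    also have "\<dots> = real ((s+m) choose m) * real s / real (s+m)"
      using m by (simp only: of_nat_mult aux_cancel[of "real (r + m)"] of_nat_eq_0_iff)
    finally have "Cc r s n m = real ((s+m) choose m) * real s / real (s+m)" .
    with X show ?thesis using True by simp
  next
    case False
    then obtain k where n: "n = Suc k" by (cases n) auto
    define N where "N = r + n + m"
    have N0: "N > 0" using n N_def by auto
    define c where "c = real (Suc N choose n)"
    have e1: "real (N choose n) = c * real (Suc r + m) / real (Suc N)"
    proof -
      have "(Suc N - n) * (Suc N choose n) = Suc N * (N choose n)"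
        using binomial_absorb_comp[of "Suc N" n] by simp
      moreover have "Suc N - n = Suc r + m" using N_def by simp
      ultimately have "real (Suc r + m) * c = real (Suc N) * real (N choose n)"
        unfolding c_def by (metis of_nat_mult)
      then show ?thesis by (simp add: field_simps)
    qed
    have e2: "real (N choose k) = c * real n / real (Suc N)"
    proof -
      have "Suc k * (Suc N choose Suc k) = Suc N * (N choose k)"
        using Suc_times_binomial[of k N] by simp
      then have "real n * c = real (Suc N) * real (N choose k)"
        unfolding c_def n by (metis of_nat_mult)
      then show ?thesis by (simp add: field_simps)
    qed
    define S where "S = s + n + m"
    have S0: "S > 0" using n S_def by auto
    have A: "Cc (Suc r) s n m = c * real (S choose m) * real (Suc r * s + Suc r * n + s * m) / (real (Suc N) * real S)"
      using N0 S0 by (simp add: Cc_formula c_def N_def S_def)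
    have B: "Cc r s n m = real (N choose n) * real (S choose m) * real (r * s + r * n + s * m) / (real N * real S)"
      using N0 S0 by (simp add: Cc_formula N_def S_def)
    have C: "Cc (Suc r) (Suc s) (n-1) m = real (N choose k) * real (S choose m) * real (Suc r * Suc s + Suc r * k + Suc s * m) / (real N * real S)"
      using N0 S0 n by (simp add: Cc_formula N_def S_def)
    define Z where "Z = real (S choose m)"
    have key: "real (Suc r * s + Suc r * n + s * m) * real N
       = real (Suc r + m) * real (r * s + r * n + s * m) + real n * real (Suc r * Suc s + Suc r * k + Suc s * m)"
      unfolding N_def n by (simp add: algebra_simps)
    have "Cc r s n m + Cc (Suc r) (Suc s) (n-1) m
       = c * Z / (real (Suc N) * real N * real S) *
         (real (Suc r + m) * real (r * s + r * n + s * m) + real n * real (Suc r * Suc s + Suc r * k + Suc s * m))"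
      unfolding B C e1 e2 Z_def by (rule aux2)
    also have "\<dots> = c * Z / (real (Suc N) * real N * real S) * (real (Suc r * s + Suc r * n + s * m) * real N)"
      by (simp only: key)
    also have "\<dots> = Cc (Suc r) s n m"
      unfolding A Z_def using N0 by (intro aux3) simp
    finally show ?thesis using n by simp
  qed
qed


lemma Cc_rec2: "Cc r (Suc s) n m = Cc r s n m + (if m \<ge> 1 then Cc (Suc r) (Suc s) n (m-1) else 0)"
  using Cc_rec1[of s r m n] by (simp add: Cc_sym[of r] Cc_sym[of "Suc r"])

fun ucount :: "btree_s \<Rightarrow> nat" where
  "ucount (Unary t) = Suc (ucount t)" | "ucount Leaf = 0" | "ucount (Binary l r) = 0"
fun ustrip :: "btree_s \<Rightarrow> btree_s" where
  "ustrip (Unary t) = ustrip t" | "ustrip Leaf = Leaf" | "ustrip (Binary l r) = Binary l r"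
fun isU :: "btree_s \<Rightarrow> bool" where
  "isU (Unary t) = True" | "isU Leaf = False" | "isU (Binary l r) = False"

lemma decomp: "(Unary ^^ ucount t) (ustrip t) = t"
  by (induction t) auto
lemma ustrip_notU: "\<not> isU (ustrip t)"
  by (induction t) auto
lemma notU_simps: "\<not> isU c \<Longrightarrow> ucount c = 0 \<and> ustrip c = c"
  by (cases c) auto
lemma ucount_pow: "\<not> isU c \<Longrightarrow> ucount ((Unary ^^ k) c) = k"
  by (induction k) (auto simp: notU_simps)
lemma ustrip_pow: "\<not> isU c \<Longrightarrow> ustrip ((Unary ^^ k) c) = c"
  by (induction k) (auto simp: notU_simps)
lemma isU_pow: "\<not> isU c \<Longrightarrow> isU ((Unary ^^ k) c) \<longleftrightarrow> k > 0"
  by (cases k) auto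
lemma fathers_pow: "fathers j w ((Unary ^^ k) c) = fathers j w c"
  by (induction k) auto
lemma gw_pow: "gw_weight p0 p1 p2 q0 q1 q2 w ((Unary ^^ k) c) =
   (if w = T1 then p1 else q1) ^ k * gw_weight p0 p1 p2 q0 q1 q2 w c"
  by (induction k) (cases w; auto)+

lemma gw_nonneg:
  assumes "0 \<le> p0" "0 \<le> p1" "0 \<le> p2" "0 \<le> q0" "0 \<le> q1" "0 \<le> q2"
  shows "gw_weight p0 p1 p2 q0 q1 q2 w t \<ge> 0"
  by (induction t arbitrary: w) (case_tac w; use assms in auto)+

fun fw :: "(vtype \<Rightarrow> btree_s \<Rightarrow> real) \<Rightarrow> vtype list \<Rightarrow> btree_s list \<Rightarrow> real" where
  "fw G (w # ws) (t # ts) = G w t * fw G ws ts"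
| "fw G [] ts = 1"
| "fw G (w # ws) [] = 1"

fun ff :: "vtype \<Rightarrow> vtype list \<Rightarrow> btree_s list \<Rightarrow> nat" where
  "ff j (w # ws) (t # ts) = fathers j w t + ff j ws ts"
| "ff j [] ts = 0"
| "ff j (w # ws) [] = 0"

definition FS :: "vtype list \<Rightarrow> nat \<Rightarrow> nat \<Rightarrow> btree_s list set" where
  "FS ws n m = {ts. length ts = length ws \<and> ff T1 ws ts = n \<and> ff T2 ws ts = m}"

lemma FS_Nil: "FS [] n m = (if n = 0 \<and> m = 0 then {[]} else {})"
  by (auto simp: FS_def)

lemma FS_Cons: "a \<in> FS (w # ws) n m \<longleftrightarrow> (\<exists>t ts. a = t # ts \<and> length ts = length ws \<and>
   fathers T1 w t + ff T1 ws ts = n \<and> fathers T2 w t + ff T2 ws ts = m)"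
  by (cases a) (auto simp: FS_def)

lemma fw_nonneg:
  assumes "\<And>w t. G w t \<ge> 0" shows "fw G ws ts \<ge> 0"
  by (induction ws arbitrary: ts) (case_tac ts; use assms in auto)+

fun bj :: "btree_s list \<Rightarrow> btree_s list" where
  "bj (l # r # ts) = Binary l r # ts" | "bj _ = []"
fun bi :: "btree_s list \<Rightarrow> btree_s list" where
  "bi (Binary l r # ts) = l # r # ts" | "bi _ = []"

context
  fixes p0 p1 p2 q0 q1 q2 :: real
  assumes pos: "0 < p0" "0 < p1" "0 < p2" "0 < q0" "0 < q1" "0 < q2"
    and sum1: "p0 + p1 + p2 = 1" and sum2: "q0 + q1 + q2 = 1"
begin

abbreviation "G \<equiv> gw_weight p0 p1 p2 q0 q1 q2"

definition "e0 w = (if w = T1 then p0 else q0)"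
definition "e1 w = (if w = T1 then p1 else q1)"
definition "e2 w = (if w = T1 then p2 else q2)"

lemma G_simps: "G w Leaf = e0 w" "G w (Unary t) = e1 w * G w t"
  "G w (Binary l r) = e2 w * G T1 l * G T2 r"
  by (cases w; simp add: e0_def e1_def e2_def)+

lemma G_nonneg: "G w t \<ge> 0"
  using pos by (intro gw_nonneg) auto

lemma fwG_nonneg: "fw G ws ts \<ge> 0"
  by (rule fw_nonneg) (rule G_nonneg)

lemma e1_bounds: "0 \<le> e1 w" "e1 w < 1"
  using pos sum1 sum2 by (auto simp: e1_def)

lemma step:
  assumes h1: "(fw G ws has_sum V1) (FS ws n m)"
    and h2: "d1 \<le> n \<Longrightarrow> d2 \<le> m \<Longrightarrow> (fw G (T1 # T2 # ws) has_sum V2) (FS (T1 # T2 # ws) (n - d1) (m - d2))"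
    and d: "d1 = (if w = T1 then 1 else 0)" "d2 = (if w = T2 then 1 else 0)"
  shows "(fw G (w # ws) has_sum (e0 w * V1 + (if d1 \<le> n \<and> d2 \<le> m then e2 w * V2 else 0)) / (1 - e1 w))
           (FS (w # ws) n m)"
proof -
  define Core where "Core = {ts \<in> FS (w # ws) n m. \<not> isU (hd ts)}"
  define L where "L = {ts \<in> Core. hd ts = Leaf}"
  define B where "B = {ts \<in> Core. hd ts \<noteq> Leaf}"
  have CLB: "Core = L \<union> B" "L \<inter> B = {}" unfolding L_def B_def by auto
  have hL: "(fw G (w # ws) has_sum e0 w * V1) L"
  proof -
    have "((\<lambda>ts. e0 w * fw G ws ts) has_sum e0 w * V1) (FS ws n m)"
      using h1 by (rule has_sum_cmult_right)
    also have "?this \<longleftrightarrow> (fw G (w # ws) has_sum e0 w * V1) L"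
      by (rule has_sum_reindex_bij_witness[where i = tl and j = "\<lambda>ts. Leaf # ts"])
         (auto simp: L_def Core_def G_simps FS_def length_Suc_conv)
    finally show ?thesis .
  qed
  have hB: "(fw G (w # ws) has_sum (if d1 \<le> n \<and> d2 \<le> m then e2 w * V2 else 0)) B"
  proof (cases "d1 \<le> n \<and> d2 \<le> m")
    case True
    have "((\<lambda>ts. e2 w * fw G (T1 # T2 # ws) ts) has_sum e2 w * V2) (FS (T1 # T2 # ws) (n - d1) (m - d2))"
      using h2 True by (intro has_sum_cmult_right) auto
    also have "?this \<longleftrightarrow> (fw G (w # ws) has_sum e2 w * V2) B"
    proof (rule has_sum_reindex_bij_witness[where i = bi and j = bj])
      fix a assume "a \<in> FS (T1 # T2 # ws) (n - d1) (m - d2)"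
      then obtain l r ts where a: "a = l # r # ts" "length ts = length ws"
        "fathers T1 T1 l + fathers T1 T2 r + ff T1 ws ts = n - d1"
        "fathers T2 T1 l + fathers T2 T2 r + ff T2 ws ts = m - d2"
        by (auto simp: FS_def length_Suc_conv)
      show "bi (bj a) = a" using a by simp
      show "bj a \<in> B" using a True d by (auto simp: B_def Core_def FS_Cons)
      show "fw G (w # ws) (bj a) = e2 w * fw G (T1 # T2 # ws) a" using a by (simp add: G_simps)
    next
      fix b assume "b \<in> B"
      then obtain t ts where b: "b = t # ts" "length ts = length ws"
        "fathers T1 w t + ff T1 ws ts = n" "fathers T2 w t + ff T2 ws ts = m" "t \<noteq> Leaf" "\<not> isU t"
        by (auto simp: B_def Core_def FS_Cons)
      then obtain l r where t: "t = Binary l r" by (cases t) auto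
      show "bj (bi b) = b" using b t by simp
      show "bi b \<in> FS (T1 # T2 # ws) (n - d1) (m - d2)" using b t d by (auto simp: FS_Cons)
    qed simp
    finally show ?thesis using True by simp
  next
    case False
    have "B = {}"
    proof (rule ccontr)
      assume "B \<noteq> {}"
      then obtain b where "b \<in> B" by blast
      then obtain t ts where b: "b = t # ts" "length ts = length ws"
        "fathers T1 w t + ff T1 ws ts = n" "fathers T2 w t + ff T2 ws ts = m" "t \<noteq> Leaf" "\<not> isU t"
        by (auto simp: B_def Core_def FS_Cons)
      then obtain l r where t: "t = Binary l r" by (cases t) auto
      show False using b t d False by auto
    qed
    then show ?thesis using False by (simp only: if_False if_P) (smt (verit) has_sum_empty)
  qed
  define SC where "SC = e0 w * V1 + (if d1 \<le> n \<and> d2 \<le> m then e2 w * V2 else 0)"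
  have hC: "(fw G (w # ws) has_sum SC) Core"
    unfolding SC_def CLB(1) by (rule has_sum_Un_disjoint[OF hL hB CLB(2)])
  define f where "f = (\<lambda>(b, k). e1 w ^ k * fw G (w # ws) b)"
  have fib: "((\<lambda>k. f (b, k)) has_sum fw G (w # ws) b / (1 - e1 w)) UNIV" for b
  proof -
    have "(\<lambda>k. e1 w ^ k) sums (1 / (1 - e1 w))"
      using e1_bounds[of w] by (intro geometric_sums) auto
    then have "((\<lambda>k. e1 w ^ k) has_sum (1 / (1 - e1 w))) UNIV"
      using e1_bounds[of w] by (intro sums_nonneg_imp_has_sum) auto
    from has_sum_cmult_left[OF this, of "fw G (w # ws) b"]
    show ?thesis by (simp add: f_def)
  qed
  have g: "((\<lambda>b. fw G (w # ws) b / (1 - e1 w)) has_sum SC / (1 - e1 w)) Core"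
    using hC by (rule has_sum_divide_const)
  have fnn: "f (b, k) \<ge> 0" for b k
    unfolding f_def using e1_bounds[of w] fwG_nonneg by simp
  have summ: "f summable_on Sigma Core (\<lambda>_. UNIV)"
    by (rule summable_on_SigmaI[OF fib has_sum_imp_summable[OF g]]) (use fnn in auto)
  have hS: "(f has_sum SC / (1 - e1 w)) (Sigma Core (\<lambda>_. UNIV))"
    by (rule has_sum_SigmaI[OF fib g summ])
  define I where "I = (\<lambda>bk :: btree_s list \<times> nat. (Unary ^^ snd bk) (hd (fst bk)) # tl (fst bk))"
  define J where "J = (\<lambda>a. (ustrip (hd a) # tl a, ucount (hd a)))"
  have "(fw G (w # ws) has_sum SC / (1 - e1 w)) (FS (w # ws) n m) \<longleftrightarrow> (f has_sum SC / (1 - e1 w)) (Sigma Core (\<lambda>_. UNIV))"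
  proof (rule has_sum_reindex_bij_witness[where j = J and i = I])
    fix a assume "a \<in> FS (w # ws) n m"
    then obtain t ts where a: "a = t # ts" "length ts = length ws"
        "fathers T1 w t + ff T1 ws ts = n" "fathers T2 w t + ff T2 ws ts = m"
      by (auto simp: FS_Cons)
    show "I (J a) = a"
      using a by (simp add: decomp I_def J_def)
    have ft: "fathers j w (ustrip t) = fathers j w t" for j
      using fathers_pow[of j w "ucount t" "ustrip t"] by (simp add: decomp)
    show "J a \<in> Sigma Core (\<lambda>_. UNIV)"
      using a ft by (auto simp: Core_def FS_Cons ustrip_notU J_def)
    have "G w t = e1 w ^ ucount t * G w (ustrip t)"
      using gw_pow[of p0 p1 p2 q0 q1 q2 w "ucount t" "ustrip t"] by (simp add: decomp e1_def)
    then show "f (J a) = fw G (w # ws) a"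
      using a by (simp add: f_def J_def)
  next
    fix bk :: "btree_s list \<times> nat" assume "bk \<in> Sigma Core (\<lambda>_. UNIV)"
    then obtain b k where bk: "bk = (b, k)" "b \<in> Core" by auto
    then obtain t ts where b: "b = t # ts" "length ts = length ws"
        "fathers T1 w t + ff T1 ws ts = n" "fathers T2 w t + ff T2 ws ts = m" "\<not> isU t"
      by (auto simp: Core_def FS_Cons)
    show "J (I bk) = bk"
      using bk b by (simp add: ustrip_pow ucount_pow I_def J_def)
    show "I bk \<in> FS (w # ws) n m"
      using bk b by (auto simp: FS_Cons fathers_pow I_def)
  qed simp
  with hS show ?thesis unfolding SC_def by simp
qed


definition "PP = p0 / (p0 + p2)"
definition "QQ = q0 / (q0 + q2)"

definition Val :: "vtype list \<Rightarrow> nat \<Rightarrow> nat \<Rightarrow> real" where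
  "Val ws n m = Cc (count_list ws T1) (count_list ws T2) n m * PP ^ (count_list ws T1 + m) * (1 - PP) ^ n
      * QQ ^ (count_list ws T2 + n) * (1 - QQ) ^ m"

lemma ratios: "p0 / (1 - p1) = PP" "p2 / (1 - p1) = 1 - PP" "q0 / (1 - q1) = QQ" "q2 / (1 - q1) = 1 - QQ"
proof -
  have a: "1 - p1 = p0 + p2" "1 - q1 = q0 + q2" using sum1 sum2 by auto
  have b: "p0 + p2 > 0" "q0 + q2 > 0" using pos by auto
  show "p0 / (1 - p1) = PP" "q0 / (1 - q1) = QQ" unfolding a PP_def QQ_def by auto
  show "p2 / (1 - p1) = 1 - PP" "q2 / (1 - q1) = 1 - QQ" unfolding a PP_def QQ_def using b
    by (auto simp: field_simps)
qed

lemma arith_T1: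
  "(p0 * Val ws n m + (if 1 \<le> n \<and> 0 \<le> m then p2 * Val (T1 # T2 # ws) (n - 1) (m - 0) else 0)) / (1 - p1)
     = Val (T1 # ws) n m"
proof -
  define r where "r = count_list ws T1"
  define s where "s = count_list ws T2"
  have lhs: "(p0 * Val ws n m + (if 1 \<le> n \<and> 0 \<le> m then p2 * Val (T1 # T2 # ws) (n - 1) (m - 0) else 0)) / (1 - p1)
     = PP * Val ws n m + (if 1 \<le> n then (1 - PP) * Val (T1 # T2 # ws) (n - 1) m else 0)"
  proof -
    have "(p0 * Val ws n m + (if 1 \<le> n \<and> 0 \<le> m then p2 * Val (T1 # T2 # ws) (n - 1) (m - 0) else 0)) / (1 - p1)
      = p0 / (1 - p1) * Val ws n m + (if 1 \<le> n then p2 / (1 - p1) * Val (T1 # T2 # ws) (n - 1) m else 0)"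
      by (simp add: add_divide_distrib)
    then show ?thesis unfolding ratios .
  qed
  show ?thesis
  proof (cases n)
    case 0
    then show ?thesis unfolding lhs unfolding Val_def by (simp add: Cc_rec1 r_def[symmetric] s_def[symmetric])
  next
    case (Suc k)
    show ?thesis unfolding lhs unfolding Val_def using Suc
      by (simp add: Cc_rec1 r_def[symmetric] s_def[symmetric] algebra_simps)
  qed
qed

lemma arith_T2:
  "(q0 * Val ws n m + (if 0 \<le> n \<and> 1 \<le> m then q2 * Val (T1 # T2 # ws) (n - 0) (m - 1) else 0)) / (1 - q1)
     = Val (T2 # ws) n m"
proof -
  define r where "r = count_list ws T1"
  define s where "s = count_list ws T2"
  have lhs: "(q0 * Val ws n m + (if 0 \<le> n \<and> 1 \<le> m then q2 * Val (T1 # T2 # ws) (n - 0) (m - 1) else 0)) / (1 - q1)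
     = QQ * Val ws n m + (if 1 \<le> m then (1 - QQ) * Val (T1 # T2 # ws) n (m - 1) else 0)"
  proof -
    have "(q0 * Val ws n m + (if 0 \<le> n \<and> 1 \<le> m then q2 * Val (T1 # T2 # ws) (n - 0) (m - 1) else 0)) / (1 - q1)
      = q0 / (1 - q1) * Val ws n m + (if 1 \<le> m then q2 / (1 - q1) * Val (T1 # T2 # ws) n (m - 1) else 0)"
      by (simp add: add_divide_distrib)
    then show ?thesis unfolding ratios .
  qed
  show ?thesis
  proof (cases m)
    case 0
    then show ?thesis unfolding lhs unfolding Val_def by (simp add: Cc_rec2 r_def[symmetric] s_def[symmetric])
  next
    case (Suc k)
    show ?thesis unfolding lhs unfolding Val_def using Suc
      by (simp add: Cc_rec2 r_def[symmetric] s_def[symmetric] algebra_simps)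
  qed
qed

lemma forest: "(fw G ws has_sum Val ws n m) (FS ws n m)"
proof (induction "n + m" arbitrary: n m ws rule: less_induct)
  case less
  show ?case
  proof (induction ws)
    case Nil
    have "((\<lambda>a. 1::real) has_sum 1) {[]::btree_s list}"
      using has_sum_finite[of "{[]::btree_s list}" "\<lambda>a. 1::real"] by simp
    then show ?case by (simp add: FS_Nil Val_def Cc_00)
  next
    case (Cons w ws)
    have e: "e0 T1 = p0" "e1 T1 = p1" "e2 T1 = p2" "e0 T2 = q0" "e1 T2 = q1" "e2 T2 = q2"
      by (simp_all add: e0_def e1_def e2_def)
    show ?case
    proof (cases w)
      case T1
      have hT1: "(fw G (T1 # T2 # ws) has_sum Val (T1 # T2 # ws) (n - 1) (m - 0)) (FS (T1 # T2 # ws) (n - 1) (m - 0))"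
        if "1 \<le> n" "0 \<le> m" using that by (intro less) auto
      have "(fw G (T1 # ws) has_sum (e0 T1 * Val ws n m + (if 1 \<le> n \<and> 0 \<le> m then e2 T1 * Val (T1 # T2 # ws) (n - 1) (m - 0) else 0)) / (1 - e1 T1)) (FS (T1 # ws) n m)"
        by (rule step[OF Cons hT1]) simp_all
      then show ?thesis unfolding T1 by (simp only: e arith_T1)
    next
      case T2
      have hT2: "(fw G (T1 # T2 # ws) has_sum Val (T1 # T2 # ws) (n - 0) (m - 1)) (FS (T1 # T2 # ws) (n - 0) (m - 1))"
        if "0 \<le> n" "1 \<le> m" using that by (intro less) auto
      have "(fw G (T2 # ws) has_sum (e0 T2 * Val ws n m + (if 0 \<le> n \<and> 1 \<le> m then e2 T2 * Val (T1 # T2 # ws) (n - 0) (m - 1) else 0)) / (1 - e1 T2)) (FS (T2 # ws) n m)"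
        by (rule step[OF Cons hT2]) simp_all
      then show ?thesis unfolding T2 by (simp only: e arith_T2)
    qed
  qed
qed


lemma Cc_10: "n \<ge> 1 \<Longrightarrow> Cc 1 0 n m = narayana (n + m) (m + 1)"
proof -
  assume n1: "n \<ge> 1"
  then obtain k where n: "n = Suc k" by (cases n) auto
  have "Suc k * (Suc (n + m) choose Suc k) = Suc (n + m) * ((n + m) choose k)"
    by (rule Suc_times_binomial)
  moreover have "(n + m) choose k = (n + m) choose (m + 1)"
    using binomial_symmetric[of k "n + m"] n by simp
  ultimately have e: "real n * real (Suc (n + m) choose n) = real (Suc (n + m)) * real ((n + m) choose (m + 1))"
    unfolding n by (metis of_nat_mult)
  have "Cc 1 0 n m = real (Suc (n + m) choose n) * real ((n + m) choose m) * real n / (real (Suc (n + m)) * real (n + m))"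
    using n1 by (simp add: Cc_formula)
  also have "\<dots> = (real n * real (Suc (n + m) choose n)) * real ((n + m) choose m) / (real (Suc (n + m)) * real (n + m))"
    by (simp add: algebra_simps)
  also have "\<dots> = real ((n + m) choose (m + 1)) * real ((n + m) choose m) / real (n + m)"
    unfolding e using n by (subst aux4) simp_all
  finally show ?thesis by (simp add: narayana_def)
qed

lemma tree_result:
  assumes "n \<ge> 1"
  shows "(G T1 has_sum (narayana (n + m) (m + 1) * PP ^ (m + 1) * (1 - PP) ^ n * QQ ^ n * (1 - QQ) ^ m))
     {t. fathers T1 T1 t = n \<and> fathers T2 T1 t = m}"
proof -
  have "(fw G [T1] has_sum Val [T1] n m) (FS [T1] n m)" by (rule forest)
  also have "?this \<longleftrightarrow> (G T1 has_sum Val [T1] n m) {t. fathers T1 T1 t = n \<and> fathers T2 T1 t = m}"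
    by (rule has_sum_reindex_bij_witness[where i = "\<lambda>t. [t]" and j = hd])
       (auto simp: FS_def length_Suc_conv)
  moreover have "Val [T1] n m = narayana (n + m) (m + 1) * PP ^ (m + 1) * (1 - PP) ^ n * QQ ^ n * (1 - QQ) ^ m"
  proof -
    have c: "count_list [T1] T1 = 1" "count_list [T1] T2 = 0" by simp_all
    show ?thesis unfolding Val_def c Cc_10[OF assms] by (simp add: add.commute)
  qed
  ultimately show ?thesis by simp
qed
end


theorem theorem4p1:
  fixes p0 p1 p2 q0 q1 q2 :: real and n m :: nat
  assumes "0 < p0" "p0 < 1" "0 < p1" "p1 < 1" "0 < p2" "p2 < 1"
    and "0 < q0" "q0 < 1" "0 < q1" "q1 < 1" "0 < q2" "q2 < 1"
    and "p0 + p1 + p2 = 1" "q0 + q1 + q2 = 1"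
    and finite_as: "(gw_weight p0 p1 p2 q0 q1 q2 T1 has_sum 1) UNIV"
    and "n \<ge> 1"
  shows "(gw_weight p0 p1 p2 q0 q1 q2 T1 has_sum
           (let P = p0 / (p0 + p2); Q = q0 / (q0 + q2) in
              narayana (n + m) (m + 1) * P ^ (m + 1) * (1 - P) ^ n * Q ^ n * (1 - Q) ^ m))
         {t. fathers T1 T1 t = n \<and> fathers T2 T1 t = m}"
  using tree_result[of p0 p1 p2 q0 q1 q2 n m] assms by (simp add: PP_def QQ_def Let_def)

end
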